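(* Let $X$ be a finite connected poset, $F$ a field with $\mathrm{char}(F)=2$, and $\varphi$ a Lie automorphism of $I(X,F)$. The following are equivalent: (1) $\varphi(f^2)=\varphi(f)^2$ for all $f\in I(X,F)$; (2) $\varphi(E(I(X,F)))\subseteq E(I(X,F))$; (3) $\varphi(e_x)$ is an idempotent for every $x\in X$.
   Context: $I(X,F)$ is the incidence algebra of the locally finite poset $X$ over $F$ (functions $f:X\times X\to F$ vanishing unless $x\le y$, with product $(fg)(x,y)=\sum_{x\le z\le y}f(x,z)g(z,y)$). For $x\le y$, $e_{xy}\in I(X,F)$ is the function equal to $1$ at $(x,y)$ and $0$ elsewhere, and $e_x:=e_{xx}$. A poset is connected if any two elements are joined by a finite sequence of elements in which consecutive elements are comparable. $E(A)$ denotes the idempotents of $A$. In characteristic $2$, a Lie automorphism of $I(X,F)$ is a bijective $F$-linear map $\varphi$ with $\varphi(ab+ba)=\varphi(a)\varphi(b)+\varphi(b)\varphi(a)$ for all $a,b$. *)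

theory Defs
  imports Main
begin

text \<open>The poset X is the (finite) type 'a with its order. Elements of the incidence
algebra I(X,F) are functions f :: 'a => 'a => 'f vanishing off the order relation.\<close>

definition incidence_algebra :: "('a::order \<Rightarrow> 'a \<Rightarrow> 'f::field) set" where
  "incidence_algebra = {f. \<forall>x y. \<not> x \<le> y \<longrightarrow> f x y = 0}"

definition inc_mult :: "('a::order \<Rightarrow> 'a \<Rightarrow> 'f::field) \<Rightarrow> ('a \<Rightarrow> 'a \<Rightarrow> 'f) \<Rightarrow> ('a \<Rightarrow> 'a \<Rightarrow> 'f)" where
  "inc_mult f g = (\<lambda>x y. \<Sum>z\<in>{z. x \<le> z \<and> z \<le> y}. f x z * g z y)"

definition inc_e :: "'a::order \<Rightarrow> ('a \<Rightarrow> 'a \<Rightarrow> 'f::field)" where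
  "inc_e x = (\<lambda>u v. if u = x \<and> v = x then 1 else 0)"

definition inc_idempotents :: "('a::order \<Rightarrow> 'a \<Rightarrow> 'f::field) set" where
  "inc_idempotents = {f \<in> incidence_algebra. inc_mult f f = f}"

definition poset_connected :: "'a::order itself \<Rightarrow> bool" where
  "poset_connected _ = (\<forall>x y::'a. \<exists>xs. xs \<noteq> [] \<and> hd xs = x \<and> last xs = y \<and>
      (\<forall>i < length xs - 1. xs ! i \<le> xs ! Suc i \<or> xs ! Suc i \<le> xs ! i))"

definition lie_automorphism :: "(('a::order \<Rightarrow> 'a \<Rightarrow> 'f::field) \<Rightarrow> ('a \<Rightarrow> 'a \<Rightarrow> 'f)) \<Rightarrow> bool" where
  "lie_automorphism \<phi> \<longleftrightarrow>
     bij_betw \<phi> incidence_algebra incidence_algebra \<and>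
     (\<forall>f\<in>incidence_algebra. \<forall>g\<in>incidence_algebra. \<phi> (\<lambda>x y. f x y + g x y) = (\<lambda>x y. \<phi> f x y + \<phi> g x y)) \<and>
     (\<forall>c. \<forall>f\<in>incidence_algebra. \<phi> (\<lambda>x y. c * f x y) = (\<lambda>x y. c * \<phi> f x y)) \<and>
     (\<forall>a\<in>incidence_algebra. \<forall>b\<in>incidence_algebra.
        \<phi> (\<lambda>x y. inc_mult a b x y + inc_mult b a x y) =
          (\<lambda>x y. inc_mult (\<phi> a) (\<phi> b) x y + inc_mult (\<phi> b) (\<phi> a) x y))"

end

theory Submission imports Defs begin

definition padd :: "('a \<Rightarrow> 'a \<Rightarrow> 'f::field) \<Rightarrow> ('a \<Rightarrow> 'a \<Rightarrow> 'f) \<Rightarrow> ('a \<Rightarrow> 'a \<Rightarrow> 'f)" where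
  "padd f g = (\<lambda>x y. f x y + g x y)"
definition psc :: "'f::field \<Rightarrow> ('a \<Rightarrow> 'a \<Rightarrow> 'f) \<Rightarrow> ('a \<Rightarrow> 'a \<Rightarrow> 'f)" where
  "psc c f = (\<lambda>x y. c * f x y)"
definition jor :: "('a::order \<Rightarrow> 'a \<Rightarrow> 'f::field) \<Rightarrow> ('a \<Rightarrow> 'a \<Rightarrow> 'f) \<Rightarrow> ('a \<Rightarrow> 'a \<Rightarrow> 'f)" where
  "jor a b = padd (inc_mult a b) (inc_mult b a)"
definition eij :: "'a \<Rightarrow> 'a \<Rightarrow> ('a \<Rightarrow> 'a \<Rightarrow> 'f::field)" where
  "eij u v = (\<lambda>x y. if x = u \<and> y = v then 1 else 0)"

lemma inc_e_eij: "inc_e x = eij x x"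
  by (simp add: inc_e_def eij_def)

lemma eij_in: "(u::'a::order) \<le> v \<Longrightarrow> eij u v \<in> (incidence_algebra :: ('a \<Rightarrow> 'a \<Rightarrow> 'f::field) set)"
  by (auto simp: eij_def incidence_algebra_def)

lemma inc_e_in: "inc_e x \<in> incidence_algebra"
  by (simp add: inc_e_eij eij_in)

lemma zero_in: "(\<lambda>x y. 0) \<in> incidence_algebra"
  by (simp add: incidence_algebra_def)

lemma padd_in: "f \<in> incidence_algebra \<Longrightarrow> g \<in> incidence_algebra \<Longrightarrow> padd f g \<in> incidence_algebra"
  by (simp add: incidence_algebra_def padd_def)

lemma psc_in: "f \<in> incidence_algebra \<Longrightarrow> psc c f \<in> incidence_algebra"
  by (simp add: incidence_algebra_def psc_def)

lemma mult_in: "inc_mult f g \<in> incidence_algebra"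
  unfolding incidence_algebra_def inc_mult_def
  by (auto intro!: sum.neutral dest: order_trans)

lemma jor_in: "jor f g \<in> incidence_algebra"
  by (simp add: jor_def padd_in mult_in)

lemma mult_diag: "inc_mult f g x x = f x x * g x x"
proof -
  have "{z. x \<le> z \<and> z \<le> x} = {x}" by (auto intro: antisym)
  then show ?thesis by (simp add: inc_mult_def)
qed

lemma mult_e_right:
  fixes f :: "'a::{order,finite} \<Rightarrow> 'a \<Rightarrow> 'f::field"
  assumes "f \<in> incidence_algebra"
  shows "inc_mult f (inc_e v) x y = (if y = v then f x v else 0)"
proof (cases "y = v \<and> x \<le> v")
  case True
  then show ?thesis
    by (simp add: inc_mult_def inc_e_def if_distrib if_distribR sum.delta sum.delta' cong: if_cong)
next
  case False
  then show ?thesis using assms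
    by (auto simp: inc_mult_def inc_e_def incidence_algebra_def intro!: sum.neutral)
qed

lemma mult_e_left:
  fixes f :: "'a::{order,finite} \<Rightarrow> 'a \<Rightarrow> 'f::field"
  assumes "f \<in> incidence_algebra"
  shows "inc_mult (inc_e v) f x y = (if x = v then f v y else 0)"
proof (cases "x = v \<and> v \<le> y")
  case True
  then show ?thesis
    by (simp add: inc_mult_def inc_e_def if_distrib if_distribR sum.delta sum.delta' cong: if_cong)
next
  case False
  then show ?thesis using assms
    by (auto simp: inc_mult_def inc_e_def incidence_algebra_def intro!: sum.neutral)
qed

lemma mult_assoc: fixes f :: "'a::{order,finite} \<Rightarrow> 'a \<Rightarrow> 'f::field" shows "inc_mult (inc_mult f g) h = inc_mult f (inc_mult g h)"
proof (intro ext)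
  fix x y :: 'a
  have "inc_mult (inc_mult f g) h x y
      = (\<Sum>z\<in>{z. x \<le> z \<and> z \<le> y}. \<Sum>w\<in>{w\<in>{w. x \<le> w \<and> w \<le> y}. w \<le> z}. f x w * g w z * h z y)"
    unfolding inc_mult_def sum_distrib_right
    by (intro sum.cong refl) (auto intro: order_trans)
  also have "\<dots> = (\<Sum>w\<in>{w. x \<le> w \<and> w \<le> y}. \<Sum>z\<in>{z\<in>{z. x \<le> z \<and> z \<le> y}. w \<le> z}. f x w * g w z * h z y)"
    by (rule sum.swap_restrict) auto
  also have "\<dots> = inc_mult f (inc_mult g h) x y"
    unfolding inc_mult_def sum_distrib_left
    by (intro sum.cong refl) (auto intro: order_trans simp: mult.assoc)
  finally show "inc_mult (inc_mult f g) h x y = inc_mult f (inc_mult g h) x y" .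
qed

lemma mult_padd_left: "inc_mult (padd a b) c = padd (inc_mult a c) (inc_mult b c)"
  by (simp add: inc_mult_def padd_def distrib_right sum.distrib)

lemma mult_padd_right: "inc_mult c (padd a b) = padd (inc_mult c a) (inc_mult c b)"
  by (simp add: inc_mult_def padd_def distrib_left sum.distrib)

lemma mult_psc_left: "inc_mult (psc k a) c = psc k (inc_mult a c)"
  by (simp add: inc_mult_def psc_def sum_distrib_left mult.assoc)

lemma mult_psc_right: "inc_mult c (psc k a) = psc k (inc_mult c a)"
  by (simp add: inc_mult_def psc_def sum_distrib_left mult.left_commute)

lemma central_zero:
  fixes c :: "'a::{order,finite} \<Rightarrow> 'a \<Rightarrow> 'f::field"
  assumes "c \<in> incidence_algebra" "\<forall>g\<in>incidence_algebra. inc_mult c g = inc_mult g c"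
    and "\<forall>z. c z z = 0"
  shows "c = (\<lambda>x y. 0)"
proof (intro ext)
  fix x y :: 'a
  show "c x y = 0"
  proof (cases "x = y")
    case True then show ?thesis using assms(3) by simp
  next
    case False
    have "inc_mult c (inc_e y) x y = inc_mult (inc_e y) c x y"
      using assms(2) inc_e_in by metis
    then show ?thesis using False assms(1) by (simp add: mult_e_right mult_e_left)
  qed
qed


lemma c2_eq: "(\<And>x::'f::field. x + x = 0) \<Longrightarrow> (a::'f) + b = 0 \<Longrightarrow> a = b"
  by (metis add.assoc add.commute add_0)

lemma c2_swap: assumes c2: "\<And>x::'f::field. x + x = 0" and h: "(a::'f) + b = c + d"
  shows "a + c = b + d"
proof -
  have "(a + b) + (b + c) = a + c + (b + b)" by (simp add: algebra_simps)
  then have 1: "a + c = (a + b) + (b + c)" using c2 by simp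
  have "(c + d) + (b + c) = b + d + (c + c)" by (simp add: algebra_simps)
  then have 2: "(c + d) + (b + c) = b + d" using c2 by simp
  show ?thesis using 1 2 h by simp
qed

lemma sqid: "inc_mult (padd f g) (padd f g) = padd (padd (inc_mult f f) (inc_mult g g)) (jor f g)"
  unfolding mult_padd_left mult_padd_right jor_def by (simp add: padd_def fun_eq_iff algebra_simps)

lemma jor_sq:
  fixes f :: "'a::{order,finite} \<Rightarrow> 'a \<Rightarrow> 'f::field"
  assumes c2: "\<And>x::'f. x + x = 0"
  shows "jor (inc_mult f f) h = jor f (jor f h)"
proof -
  have k: "\<And>p q r. (p::'f) + q = p + r + (r + q)"
    using c2 by (metis add.assoc add.commute add_0)
  show ?thesis
    unfolding jor_def mult_padd_left mult_padd_right mult_assoc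
    by (simp add: padd_def fun_eq_iff k[symmetric])
qed

lemma e_idem:
  fixes x :: "'a::{order,finite}"
  shows "inc_mult (inc_e x) (inc_e x) = (inc_e x :: 'a \<Rightarrow> 'a \<Rightarrow> 'f::field)"
  by (simp add: mult_e_right inc_e_in fun_eq_iff) (simp add: inc_e_def)

lemma eij_sq: "u \<noteq> v \<Longrightarrow> inc_mult (eij u v) (eij u v) = (\<lambda>x y. (0::'f::field))"
  by (auto simp: inc_mult_def eij_def fun_eq_iff intro!: sum.neutral)

lemma jor_eij:
  fixes u :: "'a::{order,finite}"
  assumes "u < v"
  shows "jor (inc_e u) (eij u v) = (eij u v :: 'a \<Rightarrow> 'a \<Rightarrow> 'f::field)"
  using assms
  by (auto simp: jor_def padd_def fun_eq_iff mult_e_left mult_e_right eij_in)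
     (auto simp: eij_def)


theorem lemma3p3:
  fixes \<phi> :: "('a::{order,finite} \<Rightarrow> 'a \<Rightarrow> 'f::field) \<Rightarrow> ('a \<Rightarrow> 'a \<Rightarrow> 'f)"
  assumes "poset_connected TYPE('a)"
    and "CHAR('f) = 2"
    and "lie_automorphism \<phi>"
  shows "((\<forall>f\<in>incidence_algebra. \<phi> (inc_mult f f) = inc_mult (\<phi> f) (\<phi> f))
            \<longleftrightarrow> \<phi> ` inc_idempotents \<subseteq> inc_idempotents)
       \<and> (\<phi> ` inc_idempotents \<subseteq> inc_idempotents
            \<longleftrightarrow> (\<forall>x. \<phi> (inc_e x) \<in> inc_idempotents))"
proof -
  let ?I = "incidence_algebra :: ('a \<Rightarrow> 'a \<Rightarrow> 'f) set"
  let ?z = "(\<lambda>x y. 0) :: 'a \<Rightarrow> 'a \<Rightarrow> 'f"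
  have two: "(2::'f) = 0" using assms(2) of_nat_CHAR[where 'a='f] by simp
  have c2: "\<And>x::'f. x + x = 0"
  proof -
    fix x :: 'f
    have "x + x = 2 * x" by simp
    then show "x + x = 0" using two by simp
  qed
  note L = assms(3)[unfolded lie_automorphism_def]
  have bij: "bij_betw \<phi> ?I ?I" using L by (rule conjunct1)
  have into: "\<And>f. f \<in> ?I \<Longrightarrow> \<phi> f \<in> ?I" by (rule bij_betw_apply[OF bij])
  have surj: "\<And>g. g \<in> ?I \<Longrightarrow> \<exists>h\<in>?I. g = \<phi> h"
  proof -
    fix g assume "g \<in> ?I"
    then have "g \<in> \<phi> ` ?I" by (simp only: bij_betw_imp_surj_on[OF bij])
    then obtain h where h1: "h \<in> ?I" and h2: "g = \<phi> h" by (rule imageE)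
    show "\<exists>h\<in>?I. g = \<phi> h" by (rule bexI[where P="\<lambda>h. g = \<phi> h" and x=h, OF h2 h1])
  qed
  have A1: "\<forall>f\<in>?I. \<forall>g\<in>?I. \<phi> (\<lambda>x y. f x y + g x y) = (\<lambda>x y. \<phi> f x y + \<phi> g x y)"
    using L by (rule conjunct1[OF conjunct2])
  have A2: "\<forall>c. \<forall>f\<in>?I. \<phi> (\<lambda>x y. c * f x y) = (\<lambda>x y. c * \<phi> f x y)"
    using L by (rule conjunct1[OF conjunct2[OF conjunct2]])
  have A3: "\<forall>a\<in>?I. \<forall>b\<in>?I.
        \<phi> (\<lambda>x y. inc_mult a b x y + inc_mult b a x y) =
          (\<lambda>x y. inc_mult (\<phi> a) (\<phi> b) x y + inc_mult (\<phi> b) (\<phi> a) x y)"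
    using L by (rule conjunct2[OF conjunct2[OF conjunct2]])
  have addP: "\<And>f g. f \<in> ?I \<Longrightarrow> g \<in> ?I \<Longrightarrow> \<phi> (padd f g) = padd (\<phi> f) (\<phi> g)"
    unfolding padd_def by (rule A1[rule_format])
  have scP: "\<And>c f. f \<in> ?I \<Longrightarrow> \<phi> (psc c f) = psc c (\<phi> f)"
    unfolding psc_def by (rule A2[rule_format])
  have lieP: "\<And>a b. a \<in> ?I \<Longrightarrow> b \<in> ?I \<Longrightarrow> \<phi> (jor a b) = jor (\<phi> a) (\<phi> b)"
    unfolding jor_def padd_def by (rule A3[rule_format])
  have phi0: "\<phi> ?z = ?z"
  proof -
    have "\<phi> (psc 0 ?z) = psc 0 (\<phi> ?z)" using scP zero_in by blast
    then show ?thesis by (simp add: psc_def)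
  qed
  define psi where "psi f = padd (\<phi> (inc_mult f f)) (inc_mult (\<phi> f) (\<phi> f))" for f
  have psi_in: "\<And>f. psi f \<in> ?I" unfolding psi_def by (intro padd_in into mult_in)
  have psi_add: "\<And>f g. f \<in> ?I \<Longrightarrow> g \<in> ?I \<Longrightarrow> psi (padd f g) = padd (psi f) (psi g)"
  proof -
    fix f g assume f: "f \<in> ?I" and g: "g \<in> ?I"
    have 1: "\<phi> (inc_mult (padd f g) (padd f g))
        = padd (padd (\<phi> (inc_mult f f)) (\<phi> (inc_mult g g))) (jor (\<phi> f) (\<phi> g))"
      unfolding sqid using f g by (simp add: addP lieP padd_in mult_in jor_in)
    have 2: "\<phi> (padd f g) = padd (\<phi> f) (\<phi> g)" using f g addP by blast
    have k: "\<And>p q j a b :: 'f. (p + q + j) + (a + b + j) = (p + a) + (q + b)"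
    proof -
      fix p q j a b :: 'f
      have "(p + q + j) + (a + b + j) = (p + a) + (q + b) + (j + j)" by (simp add: algebra_simps)
      then show "(p + q + j) + (a + b + j) = (p + a) + (q + b)" using c2 by simp
    qed
    show "psi (padd f g) = padd (psi f) (psi g)"
      unfolding psi_def 1 2 unfolding sqid by (simp add: padd_def k)
  qed
  have psi_sc: "\<And>c f. f \<in> ?I \<Longrightarrow> psi (psc c f) = psc (c * c) (psi f)"
  proof -
    fix c :: 'f and f assume f: "f \<in> ?I"
    have sq: "\<And>g. inc_mult (psc c g) (psc c g) = psc (c * c) (inc_mult g g)"
      unfolding mult_psc_left mult_psc_right by (simp add: psc_def fun_eq_iff mult.assoc)
    show "psi (psc c f) = psc (c * c) (psi f)"
      unfolding psi_def sq scP[OF mult_in] scP[OF f] unfolding sq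
      by (simp add: psc_def padd_def fun_eq_iff algebra_simps)
  qed
  have psi_central: "\<And>f g. f \<in> ?I \<Longrightarrow> g \<in> ?I \<Longrightarrow> inc_mult (psi f) g = inc_mult g (psi f)"
  proof -
    fix f g assume f: "f \<in> ?I" and g: "g \<in> ?I"
    obtain h where h: "h \<in> ?I" "g = \<phi> h" using surj g by blast
    have "jor (\<phi> (inc_mult f f)) g = \<phi> (jor (inc_mult f f) h)"
      using h by (simp add: lieP mult_in)
    also have "\<dots> = \<phi> (jor f (jor f h))" by (rule arg_cong[where f=\<phi>], rule jor_sq[OF c2])
    also have "\<dots> = jor (\<phi> f) (jor (\<phi> f) g)" using f h by (simp add: lieP jor_in)
    also have "\<dots> = jor (inc_mult (\<phi> f) (\<phi> f)) g" by (rule jor_sq[OF c2, symmetric])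
    finally have J: "jor (\<phi> (inc_mult f f)) g = jor (inc_mult (\<phi> f) (\<phi> f)) g" .
    show "inc_mult (psi f) g = inc_mult g (psi f)"
    proof (intro ext)
      fix x y
      from J have "jor (\<phi> (inc_mult f f)) g x y = jor (inc_mult (\<phi> f) (\<phi> f)) g x y" by simp
      then have "inc_mult (\<phi> (inc_mult f f)) g x y + inc_mult g (\<phi> (inc_mult f f)) x y
          = inc_mult (inc_mult (\<phi> f) (\<phi> f)) g x y + inc_mult g (inc_mult (\<phi> f) (\<phi> f)) x y"
        by (simp add: jor_def padd_def)
      from c2_swap[OF c2 this]
      show "inc_mult (psi f) g x y = inc_mult g (psi f) x y"
        unfolding psi_def mult_padd_left mult_padd_right
        by (simp add: padd_def)
    qed
  qed
  have zero_psi: "\<And>f. psi f = ?z \<Longrightarrow> \<phi> (inc_mult f f) = inc_mult (\<phi> f) (\<phi> f)"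
  proof -
    fix f assume h: "psi f = ?z"
    have "\<And>x y. \<phi> (inc_mult f f) x y + inc_mult (\<phi> f) (\<phi> f) x y = 0"
      using h by (simp add: psi_def padd_def fun_eq_iff)
    then show "\<phi> (inc_mult f f) = inc_mult (\<phi> f) (\<phi> f)"
      by (intro ext) (rule c2_eq[OF c2])
  qed
  have psi_eij: "\<And>u v. u < v \<Longrightarrow> psi (eij u v) = ?z"
  proof -
    fix u v :: 'a assume uv: "u < v"
    define A where "A = \<phi> (eij u v)"
    have "A = \<phi> (jor (inc_e u) (eij u v))" unfolding A_def jor_eij[OF uv] ..
    also have "\<dots> = jor (\<phi> (inc_e u)) A"
      unfolding A_def using uv by (simp add: lieP inc_e_in eij_in)
    finally have AJ: "A = jor (\<phi> (inc_e u)) A" .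
    have Ad: "\<And>z. A z z = 0"
    proof -
      fix z
      have "A z z = jor (\<phi> (inc_e u)) A z z" by (rule fun_cong[OF fun_cong[OF AJ, of z], of z])
      also have "\<dots> = 0" by (simp add: jor_def padd_def mult_diag mult.commute c2)
      finally show "A z z = 0" .
    qed
    have ps: "psi (eij u v) = inc_mult A A"
      unfolding psi_def A_def using uv by (simp add: eij_sq phi0 padd_def)
    show "psi (eij u v) = ?z"
    proof (rule central_zero)
      show "psi (eij u v) \<in> ?I" by (rule psi_in)
      show "\<forall>g\<in>?I. inc_mult (psi (eij u v)) g = inc_mult g (psi (eij u v))"
      proof (intro ballI)
        fix g assume "g \<in> ?I"
        then show "inc_mult (psi (eij u v)) g = inc_mult g (psi (eij u v))"
          by (rule psi_central[OF eij_in[OF less_imp_le[OF uv]]])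
      qed
      show "\<forall>z. psi (eij u v) z z = 0" by (simp add: ps mult_diag Ad)
    qed
  qed
  have main: "(\<forall>x. \<phi> (inc_e x) \<in> inc_idempotents) \<Longrightarrow> \<forall>f\<in>?I. psi f = ?z"
  proof -
    assume h3: "\<forall>x. \<phi> (inc_e x) \<in> inc_idempotents"
    have psi_e: "\<And>x. psi (inc_e x) = ?z"
    proof -
      fix x
      have "inc_mult (\<phi> (inc_e x)) (\<phi> (inc_e x)) = \<phi> (inc_e x)"
        using h3 by (simp add: inc_idempotents_def)
      then show "psi (inc_e x) = ?z" by (simp add: psi_def e_idem padd_def c2)
    qed
    have psi_b: "\<And>u v. u \<le> v \<Longrightarrow> psi (eij u v) = ?z"
    proof -
      fix u v :: 'a assume "u \<le> v"
      show "psi (eij u v) = ?z"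
      proof (cases "u = v")
        case True then show ?thesis using psi_e[of u] by (simp add: inc_e_eij)
      next
        case False then show ?thesis using \<open>u \<le> v\<close> psi_eij by simp
      qed
    qed
    have H: "\<And>n. \<forall>f. f \<in> ?I \<longrightarrow> card {p. f (fst p) (snd p) \<noteq> 0} = n \<longrightarrow> psi f = ?z"
    proof -
      fix n show "\<forall>f. f \<in> ?I \<longrightarrow> card {p. f (fst p) (snd p) \<noteq> 0} = n \<longrightarrow> psi f = ?z"
      proof (induction n rule: less_induct)
        case (less n)
        show ?case
        proof (intro allI impI)
          fix f assume fI: "f \<in> ?I" and cn: "card {p. f (fst p) (snd p) \<noteq> 0} = n"
          show "psi f = ?z"
          proof (cases "\<exists>u v. f u v \<noteq> 0")
            case False
            then have "f = psc 0 f" by (simp add: psc_def fun_eq_iff)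
            then have "psi f = psi (psc 0 f)" by (rule arg_cong)
            then have "psi f = psc (0 * 0) (psi f)" using psi_sc[OF fI] by simp
            then show ?thesis by (simp add: psc_def)
          next
            case True
            then obtain u v where fuv: "f u v \<noteq> 0" by blast
            have uv: "u \<le> v" using fI fuv by (auto simp: incidence_algebra_def)
            define g where "g = (\<lambda>x y. if x = u \<and> y = v then 0 else f x y)"
            have gI: "g \<in> ?I" using fI by (auto simp: g_def incidence_algebra_def)
            have fg: "f = padd g (psc (f u v) (eij u v))"
              by (auto simp: g_def padd_def psc_def eij_def fun_eq_iff)
            have "{p. g (fst p) (snd p) \<noteq> 0} = {p. f (fst p) (snd p) \<noteq> 0} - {(u, v)}"
              by (auto simp: g_def)
            then have "card {p. g (fst p) (snd p) \<noteq> 0} < n"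
              using cn fuv card_Diff1_less[of "{p. f (fst p) (snd p) \<noteq> 0}" "(u, v)"] by simp
            then have pg: "psi g = ?z" by (rule less.IH[rule_format, OF _ gI refl])
            have "psi f = psi (padd g (psc (f u v) (eij u v)))" using fg by (rule arg_cong)
            also have "\<dots> = padd (psi g) (psc (f u v * f u v) (psi (eij u v)))"
              unfolding psi_add[OF gI psc_in[OF eij_in[OF uv]]] psi_sc[OF eij_in[OF uv]] ..
            finally have "psi f = padd (psi g) (psc (f u v * f u v) (psi (eij u v)))" .
            then show ?thesis by (simp add: pg psi_b uv padd_def psc_def)
          qed
        qed
      qed
    qed
    show "\<forall>f\<in>?I. psi f = ?z" by (intro ballI) (rule H[rule_format, OF _ refl])
  qed
  have i12: "(\<forall>f\<in>?I. \<phi> (inc_mult f f) = inc_mult (\<phi> f) (\<phi> f)) \<Longrightarrow> \<phi> ` inc_idempotents \<subseteq> inc_idempotents"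
  proof (rule image_subsetI)
    fix f :: "'a \<Rightarrow> 'a \<Rightarrow> 'f" assume H: "\<forall>f\<in>?I. \<phi> (inc_mult f f) = inc_mult (\<phi> f) (\<phi> f)" and f: "f \<in> inc_idempotents"
    have fI: "f \<in> ?I" and ff: "inc_mult f f = f" using f by (simp_all add: inc_idempotents_def)
    have "inc_mult (\<phi> f) (\<phi> f) = \<phi> (inc_mult f f)" using bspec[OF H fI] by (rule sym)
    also have "\<dots> = \<phi> f" by (simp only: ff)
    finally show "\<phi> f \<in> inc_idempotents" by (simp add: inc_idempotents_def into[OF fI])
  qed
  have i23: "\<phi> ` inc_idempotents \<subseteq> inc_idempotents \<Longrightarrow> (\<forall>x. \<phi> (inc_e x) \<in> inc_idempotents)"
  proof (intro allI)
    fix x assume S: "\<phi> ` inc_idempotents \<subseteq> inc_idempotents"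
    have "inc_e x \<in> (inc_idempotents :: ('a \<Rightarrow> 'a \<Rightarrow> 'f) set)"
      by (simp add: inc_idempotents_def inc_e_in e_idem)
    then show "\<phi> (inc_e x) \<in> inc_idempotents" using S by (rule subsetD[OF _ imageI, rotated])
  qed
  have i31: "(\<forall>x. \<phi> (inc_e x) \<in> inc_idempotents) \<Longrightarrow> (\<forall>f\<in>?I. \<phi> (inc_mult f f) = inc_mult (\<phi> f) (\<phi> f))"
  proof (intro ballI)
    fix f :: "'a \<Rightarrow> 'a \<Rightarrow> 'f" assume h3: "\<forall>x. \<phi> (inc_e x) \<in> inc_idempotents" and f: "f \<in> ?I"
    show "\<phi> (inc_mult f f) = inc_mult (\<phi> f) (\<phi> f)"
      by (rule zero_psi, rule bspec[OF main[OF h3] f])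
  qed
  show ?thesis
    apply (intro conjI iffI)
       apply (erule i12)
      apply (erule i31[OF i23])
     apply (erule i23)
    apply (erule i12[OF i31])
    done
qed

end
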